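(* Let $2\le n<m$, $Q=\sum_{i\in[m]}q_i\mathrm B(\sigma_i)\in\mathbb B_m^*$ with all $q_i>0$ and $0\le\sigma_1<\cdots<\sigma_m\le1/2$, and let $W=D_Q(i_2,\dots,i_n;s_2,\dots,s_n)=\sum_{j\in[n]}p_j\mathrm B(\varepsilon_j)$ and $W'=D_Q(i'_2,\dots,i'_n;s'_2,\dots,s'_n)=\sum_{j\in[n]}p'_j\mathrm B(\varepsilon'_j)$ be $2n$-P$^*$-degradations of $Q$ (with $p_j,\varepsilon_j$ and $p'_j,\varepsilon'_j$ as in the construction of $D_Q$). Suppose $(i_k,s_k)=(i'_j,s'_j)$ for some $k,j\in\{2,\dots,n\}$. Then $p_k\ge p'_j$ if $\varepsilon_k\ge\varepsilon'_j$, and $p_{k-1}\ge p'_{j-1}$ if $\varepsilon_{k-1}\le\varepsilon'_{j-1}$.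
   Context: A BIDMC $W$ has input uniform on $\{0,1\}$, discrete output alphabet $\mathcal Y$ and transition probabilities $\Pr(y\mid x)$; its LR-profile is $P_W(\varepsilon)=\Pr\big(\mathcal L_W(y)=\varepsilon/(1-\varepsilon)\big)$ with $\mathcal L_W(\hat y)=\Pr(y=\hat y\mid x=0)/\Pr(y=\hat y\mid x=1)$, and $W\cong W'$ if LR-profiles coincide; channel identities are up to $\cong$. $W'\preccurlyeq W$ if there is a channel $T$ from the output alphabet of $W$ to that of $W'$ with $\Pr(y'\mid x'=a)=\sum_{y}\Pr(y\mid x=a)T(y'\mid y)$. $\mathrm B(\varepsilon)$ is the BSC with crossover probability $\varepsilon$; $\sum_iq_iW_i$ denotes the random switching channel (use $W_i$ with probability $q_i$ independently of the input and output the index $i$ along with the output). $\mathbb B_n$ is the set of BIDMCs equivalent to $\sum_{i\in[n]}p_i\mathrm B(\varepsilon_i)$ for a probability vector $(p_i)$ and $\varepsilon_i\in[0,1]$; $\mathbb B_n^*=\mathbb B_n\setminus\mathbb B_{n-1}$. $P_\epsilon(W)=\frac12\sum_{y}\min\{\Pr(y\mid x=0),\Pr(y\mid x=1)\}$. For a symmetric BIDMC $Q$ and $n\ge1$, $W$ is a $2n$-P-degradation of $Q$ if $W\in\mathbb B_n$, $W\preccurlyeq Q$ and $P_\epsilon(W)=\min\{P_\epsilon(W'):W'\in\mathbb B_n,\ W'\preccurlyeq Q\}$. Construction of $D_Q$: for $Q$ as in the claim, put $q_0=q_{m+1}=0$. Given integers $1\le i_2<\cdots<i_n\le m$ and reals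 $s_j\in[0,q_{i_j}]$, set $i_1=0$, $s_1=0$, $i_{n+1}=m+1$, $s_{n+1}=0$, and for $j\in[n]$ $$p_j=s_j+(q_{i_{j+1}}-s_{j+1})+\sum_{i_j<i<i_{j+1}}q_i,\qquad p_j\varepsilon_j=s_j\sigma_{i_j}+(q_{i_{j+1}}-s_{j+1})\sigma_{i_{j+1}}+\sum_{i_j<i<i_{j+1}}q_i\sigma_i$$ (terms with weight $0$ contribute $0$). Then $D_Q(i_2,\dots,i_n;s_2,\dots,s_n)=\sum_{j\in[n]:p_j>0}p_j\mathrm B(\varepsilon_j)$; the pairs $(i_j,s_j)$ are its splitting patterns. Such a channel is a $2n$-P$^*$-degradation of $Q$ if (i) all $p_j>0$ and $0\le\varepsilon_1<\cdots<\varepsilon_n\le1/2$; (ii) it is a $2n$-P-degradation of $Q$; (iii) for every $j\in[n]$ with $i_{j+1}=i_j+1$: if $s_j=0$ then $s_{j+1}=0$, and if $s_{j+1}=q_{i_{j+1}}$ then $s_j=q_{i_j}$. *)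

theory Defs
  imports Complex_Main "HOL-Library.Extended_Real"
begin

(* A BIDMC: input x :: bool (False = 0, True = 1), output alphabet encoded in nat,
   W x y = Pr(y | x).  Outputs with both probabilities 0 are "not in the alphabet". *)
type_synonym chan = "bool \<Rightarrow> nat \<Rightarrow> real"

definition chan_supp :: "chan \<Rightarrow> nat set" where
  "chan_supp W = {y. W False y \<noteq> 0 \<or> W True y \<noteq> 0}"

definition is_bidmc :: "chan \<Rightarrow> bool" where
  "is_bidmc W \<longleftrightarrow> (\<forall>x y. 0 \<le> W x y) \<and> finite (chan_supp W) \<and>
     (\<forall>x. (\<Sum>y\<in>chan_supp W. W x y) = 1)"

definition lr :: "chan \<Rightarrow> nat \<Rightarrow> ereal" where
  "lr W y = (if W True y = 0 then PInfty else ereal (W False y / W True y))"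

definition odds :: "real \<Rightarrow> ereal" where
  "odds e = (if e = 1 then PInfty else ereal (e / (1 - e)))"

(* LR-profile: P_W(eps) = Pr(L_W(y) = eps/(1-eps)), input uniform *)
definition lr_profile :: "chan \<Rightarrow> real \<Rightarrow> real" where
  "lr_profile W e = (\<Sum>y\<in>{y\<in>chan_supp W. lr W y = odds e}. (W False y + W True y) / 2)"

definition chan_equiv :: "chan \<Rightarrow> chan \<Rightarrow> bool" where
  "chan_equiv W W' \<longleftrightarrow> (\<forall>e. lr_profile W e = lr_profile W' e)"

definition degraded :: "chan \<Rightarrow> chan \<Rightarrow> bool" where
  "degraded W' W \<longleftrightarrow> (\<exists>T :: nat \<Rightarrow> nat \<Rightarrow> real.
      (\<forall>y. (\<forall>y'. 0 \<le> T y y') \<and> finite {y'. T y y' \<noteq> 0} \<and>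
           (\<Sum>y'\<in>{y'. T y y' \<noteq> 0}. T y y') = 1) \<and>
      (\<forall>a y'. W' a y' = (\<Sum>y\<in>chan_supp W. W a y * T y y')))"

definition bsc :: "real \<Rightarrow> bool \<Rightarrow> bool \<Rightarrow> real" where
  "bsc e x b = (if b = x then 1 - e else e)"

(* random switching channel  \<Sum>_{i\<in>[n]} p_i B(e_i): output (i,b) encoded as 2*i + b *)
definition bsc_mix :: "nat \<Rightarrow> (nat \<Rightarrow> real) \<Rightarrow> (nat \<Rightarrow> real) \<Rightarrow> chan" where
  "bsc_mix n p e x y =
     (if 1 \<le> y div 2 \<and> y div 2 \<le> n then p (y div 2) * bsc (e (y div 2)) x (odd y) else 0)"

definition in_B :: "nat \<Rightarrow> chan \<Rightarrow> bool" where
  "in_B n W \<longleftrightarrow> (\<exists>p e. (\<forall>i\<in>{1..n}. 0 \<le> p i \<and> 0 \<le> e i \<and> e i \<le> 1) \<and>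
      (\<Sum>i=1..n. p i) = 1 \<and> chan_equiv W (bsc_mix n p e))"

definition in_B_star :: "nat \<Rightarrow> chan \<Rightarrow> bool" where
  "in_B_star n W \<longleftrightarrow> in_B n W \<and> \<not> in_B (n - 1) W"

definition P_err :: "chan \<Rightarrow> real" where
  "P_err W = (1/2) * (\<Sum>y\<in>chan_supp W. min (W False y) (W True y))"

definition is_P_degradation :: "nat \<Rightarrow> chan \<Rightarrow> chan \<Rightarrow> bool" where
  "is_P_degradation n Q W \<longleftrightarrow> is_bidmc W \<and> in_B n W \<and> degraded W Q \<and>
     (\<forall>W'. is_bidmc W' \<and> in_B n W' \<and> degraded W' Q \<longrightarrow> P_err W \<le> P_err W')"

definition qx :: "nat \<Rightarrow> (nat \<Rightarrow> real) \<Rightarrow> nat \<Rightarrow> real" where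
  "qx m q i = (if 1 \<le> i \<and> i \<le> m then q i else 0)"

definition ix :: "nat \<Rightarrow> nat \<Rightarrow> (nat \<Rightarrow> nat) \<Rightarrow> nat \<Rightarrow> nat" where
  "ix m n ii j = (if j = 1 then 0 else if j = n + 1 then m + 1 else ii j)"

definition sx :: "nat \<Rightarrow> (nat \<Rightarrow> real) \<Rightarrow> nat \<Rightarrow> real" where
  "sx n s j = (if j = 1 \<or> j = n + 1 then 0 else s j)"

definition dq_p :: "nat \<Rightarrow> (nat \<Rightarrow> real) \<Rightarrow> nat \<Rightarrow> (nat \<Rightarrow> nat) \<Rightarrow> (nat \<Rightarrow> real) \<Rightarrow> nat \<Rightarrow> real" where
  "dq_p m q n ii s j =
     sx n s j + (qx m q (ix m n ii (j + 1)) - sx n s (j + 1)) +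
     (\<Sum>i\<in>{ix m n ii j<..<ix m n ii (j + 1)}. qx m q i)"

definition dq_pe :: "nat \<Rightarrow> (nat \<Rightarrow> real) \<Rightarrow> (nat \<Rightarrow> real) \<Rightarrow> nat \<Rightarrow> (nat \<Rightarrow> nat) \<Rightarrow> (nat \<Rightarrow> real) \<Rightarrow> nat \<Rightarrow> real" where
  "dq_pe m q \<sigma> n ii s j =
     sx n s j * \<sigma> (ix m n ii j) +
     (qx m q (ix m n ii (j + 1)) - sx n s (j + 1)) * \<sigma> (ix m n ii (j + 1)) +
     (\<Sum>i\<in>{ix m n ii j<..<ix m n ii (j + 1)}. qx m q i * \<sigma> i)"

definition dq_eps :: "nat \<Rightarrow> (nat \<Rightarrow> real) \<Rightarrow> (nat \<Rightarrow> real) \<Rightarrow> nat \<Rightarrow> (nat \<Rightarrow> nat) \<Rightarrow> (nat \<Rightarrow> real) \<Rightarrow> nat \<Rightarrow> real" where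
  "dq_eps m q \<sigma> n ii s j = dq_pe m q \<sigma> n ii s j / dq_p m q n ii s j"

definition DQ :: "nat \<Rightarrow> (nat \<Rightarrow> real) \<Rightarrow> (nat \<Rightarrow> real) \<Rightarrow> nat \<Rightarrow> (nat \<Rightarrow> nat) \<Rightarrow> (nat \<Rightarrow> real) \<Rightarrow> chan" where
  "DQ m q \<sigma> n ii s =
     bsc_mix n (\<lambda>j. if dq_p m q n ii s j > 0 then dq_p m q n ii s j else 0)
               (dq_eps m q \<sigma> n ii s)"

definition dq_params :: "nat \<Rightarrow> (nat \<Rightarrow> real) \<Rightarrow> nat \<Rightarrow> (nat \<Rightarrow> nat) \<Rightarrow> (nat \<Rightarrow> real) \<Rightarrow> bool" where
  "dq_params m q n ii s \<longleftrightarrow>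
     (\<forall>j\<in>{2..n}. 1 \<le> ii j \<and> ii j \<le> m \<and> 0 \<le> s j \<and> s j \<le> qx m q (ii j)) \<and>
     (\<forall>j\<in>{2..n}. \<forall>k\<in>{2..n}. j < k \<longrightarrow> ii j < ii k)"

definition is_Pstar_degradation ::
  "nat \<Rightarrow> (nat \<Rightarrow> real) \<Rightarrow> (nat \<Rightarrow> real) \<Rightarrow> nat \<Rightarrow> (nat \<Rightarrow> nat) \<Rightarrow> (nat \<Rightarrow> real) \<Rightarrow> bool" where
  "is_Pstar_degradation m q \<sigma> n ii s \<longleftrightarrow>
     dq_params m q n ii s \<and>
     (\<forall>j\<in>{1..n}. dq_p m q n ii s j > 0) \<and>
     0 \<le> dq_eps m q \<sigma> n ii s 1 \<and>
     (\<forall>j\<in>{1..n}. \<forall>k\<in>{1..n}. j < k \<longrightarrow> dq_eps m q \<sigma> n ii s j < dq_eps m q \<sigma> n ii s k) \<and>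
     dq_eps m q \<sigma> n ii s n \<le> 1/2 \<and>
     is_P_degradation n (bsc_mix m q \<sigma>) (DQ m q \<sigma> n ii s) \<and>
     (\<forall>j\<in>{1..n}. ix m n ii (j + 1) = ix m n ii j + 1 \<longrightarrow>
        (sx n s j = 0 \<longrightarrow> sx n s (j + 1) = 0) \<and>
        (sx n s (j + 1) = qx m q (ix m n ii (j + 1)) \<longrightarrow> sx n s j = qx m q (ix m n ii j)))"

end

theory Submission
  imports Defs
begin

definition mu :: "nat \<Rightarrow> (nat \<Rightarrow> real) \<Rightarrow> nat \<Rightarrow> real \<Rightarrow> nat \<Rightarrow> real" where
  "mu m q i s l = (if l < i then qx m q l else if l = i then qx m q l - s else 0)"

definition vc :: "nat \<Rightarrow> (nat \<Rightarrow> real) \<Rightarrow> nat \<Rightarrow> real \<Rightarrow> bool" where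
  "vc m q i s \<longleftrightarrow> i \<le> m + 1 \<and> 0 \<le> s \<and> s \<le> qx m q i"

lemma qx_nonneg: "\<forall>i\<in>{1..m}. 0 < q i \<Longrightarrow> 0 \<le> qx m q l"
  by (auto simp: qx_def intro: less_imp_le)

lemma qx_pos: "0 < qx m q l \<Longrightarrow> 1 \<le> l \<and> l \<le> m"
  by (auto simp: qx_def split: if_splits)

lemma qx_pos2: "\<forall>i\<in>{1..m}. 0 < q i \<Longrightarrow> 1 \<le> l \<Longrightarrow> l \<le> m \<Longrightarrow> 0 < qx m q l"
  by (auto simp: qx_def)

lemma mu_bounds: "\<forall>i\<in>{1..m}. 0 < q i \<Longrightarrow> vc m q i s \<Longrightarrow> 0 \<le> mu m q i s l \<and> mu m q i s l \<le> qx m q l"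
  using qx_nonneg[of m q l] by (auto simp: mu_def vc_def)

lemma mu_pos: "0 < mu m q i s l \<Longrightarrow> l \<le> i"
  by (auto simp: mu_def split: if_splits)

lemma mu_lt: "vc m q i s \<Longrightarrow> mu m q i s l < qx m q l \<Longrightarrow> i \<le> l"
  by (auto simp: mu_def vc_def split: if_splits)

lemma mu_mono: "\<forall>i\<in>{1..m}. 0 < q i \<Longrightarrow> vc m q i s \<Longrightarrow> vc m q i' s' \<Longrightarrow>
   i < i' \<or> (i = i' \<and> s' \<le> s) \<Longrightarrow> mu m q i s l \<le> mu m q i' s' l"
  using qx_nonneg[of m q l] by (auto simp: mu_def vc_def)

lemma mu_diff: "i0 < i1 \<Longrightarrow> mu m q i1 s1 l - mu m q i0 s0 l =
   (if l = i0 then s0 else 0) + (if l = i1 then qx m q l - s1 else 0) +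
   (if i0 < l \<and> l < i1 then qx m q l else 0)"
  by (auto simp: mu_def)

lemma sum_mu_diff:
  assumes "i0 < i1" "i1 \<le> m + 1"
  shows "(\<Sum>l\<in>{0..m+1}. (mu m q i1 s1 l - mu m q i0 s0 l) * f l) =
    s0 * f i0 + (qx m q i1 - s1) * f i1 + (\<Sum>l\<in>{i0<..<i1}. qx m q l * f l)"
proof -
  have "(\<Sum>l\<in>{0..m+1}. (mu m q i1 s1 l - mu m q i0 s0 l) * f l) =
     (\<Sum>l\<in>{0..m+1}. (if l = i0 then s0 * f l else 0) + (if l = i1 then (qx m q l - s1) * f l else 0) +
       (if i0 < l \<and> l < i1 then qx m q l * f l else 0))"
    by (rule sum.cong) (auto simp: mu_diff[OF assms(1)] distrib_right)
  also have "\<dots> = s0 * f i0 + (qx m q i1 - s1) * f i1 + (\<Sum>l\<in>{0..m+1}. if i0 < l \<and> l < i1 then qx m q l * f l else 0)"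
    using assms by (simp only: sum.distrib sum.delta) simp
  also have "(\<Sum>l\<in>{0..m+1}. if i0 < l \<and> l < i1 then qx m q l * f l else 0) = (\<Sum>l\<in>{l\<in>{0..m+1}. i0 < l \<and> l < i1}. qx m q l * f l)"
    by (rule sum.inter_filter[symmetric]) simp
  also have "{l\<in>{0..m+1}. i0 < l \<and> l < i1} = {i0<..<i1}" using assms by auto
  finally show ?thesis .
qed

lemma avg:
  fixes w d \<sigma> :: "nat \<Rightarrow> real"
  assumes "finite S" "\<forall>l\<in>S. 0 \<le> w l" "\<forall>l\<in>S. 0 \<le> d l" "0 < sum w S" "0 < sum d S"
    "\<forall>l\<in>S. 0 < w l \<longrightarrow> \<sigma> l \<le> \<theta>" "\<forall>l\<in>S. 0 < d l \<longrightarrow> \<theta> \<le> \<sigma> l"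
    "(\<exists>l\<in>S. 0 < w l \<and> \<sigma> l < \<theta>) \<or> (\<exists>l\<in>S. 0 < d l \<and> \<theta> < \<sigma> l)"
  shows "(\<Sum>l\<in>S. w l * \<sigma> l) * sum d S < (\<Sum>l\<in>S. d l * \<sigma> l) * sum w S"
proof -
  define A where "A = (\<Sum>l\<in>S. w l * (\<theta> - \<sigma> l))"
  define B where "B = (\<Sum>l\<in>S. d l * (\<sigma> l - \<theta>))"
  have tA: "\<forall>l\<in>S. 0 \<le> w l * (\<theta> - \<sigma> l)"
  proof
    fix l assume "l \<in> S" then show "0 \<le> w l * (\<theta> - \<sigma> l)"
      using assms(2,6) by (cases "w l = 0") auto
  qed
  have tB: "\<forall>l\<in>S. 0 \<le> d l * (\<sigma> l - \<theta>)"
  proof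
    fix l assume "l \<in> S" then show "0 \<le> d l * (\<sigma> l - \<theta>)"
      using assms(3,7) by (cases "d l = 0") auto
  qed
  have A0: "0 \<le> A" unfolding A_def using tA by (simp add: sum_nonneg)
  have B0: "0 \<le> B" unfolding B_def using tB by (simp add: sum_nonneg)
  have AB: "0 < A \<or> 0 < B"
    using assms(8)
  proof
    assume "\<exists>l\<in>S. 0 < w l \<and> \<sigma> l < \<theta>"
    then obtain l where "l \<in> S" "0 < w l" "\<sigma> l < \<theta>" by blast
    then have "0 < A" unfolding A_def using tA assms(1)
      by (intro sum_pos2[of S l]) auto
    then show ?thesis by simp
  next
    assume "\<exists>l\<in>S. 0 < d l \<and> \<theta> < \<sigma> l"
    then obtain l where "l \<in> S" "0 < d l" "\<theta> < \<sigma> l" by blast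
    then have "0 < B" unfolding B_def using tB assms(1)
      by (intro sum_pos2[of S l]) auto
    then show ?thesis by simp
  qed
  have e1: "(\<Sum>l\<in>S. w l * \<sigma> l) = \<theta> * sum w S - A"
    unfolding A_def by (simp add: algebra_simps sum_subtractf sum_distrib_left)
  have e2: "(\<Sum>l\<in>S. d l * \<sigma> l) = \<theta> * sum d S + B"
    unfolding B_def by (simp add: algebra_simps sum_subtractf sum_distrib_left)
  have "0 < B * sum w S + A * sum d S"
    using AB A0 B0 assms(4,5)
    by (metis add_pos_nonneg add_nonneg_pos mult_nonneg_nonneg mult_pos_pos less_imp_le)
  then show ?thesis unfolding e1 e2 by (simp add: algebra_simps)
qed

lemma sum_pos_ex: "finite S \<Longrightarrow> 0 < sum f S \<Longrightarrow> \<exists>l\<in>S. 0 < (f l :: real)"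
  by (meson not_less sum_nonpos)

lemma smono_le: "\<forall>a\<in>{1..(m::nat)}. \<forall>b\<in>{1..m}. a < b \<longrightarrow> \<sigma> a < (\<sigma> b :: real) \<Longrightarrow>
   1 \<le> a \<Longrightarrow> a \<le> b \<Longrightarrow> b \<le> m \<Longrightarrow> \<sigma> a \<le> \<sigma> b"
proof (cases "a = b")
  case False
  assume H: "\<forall>a\<in>{1..m}. \<forall>b\<in>{1..m}. a < b \<longrightarrow> \<sigma> a < (\<sigma> b :: real)" "1 \<le> a" "a \<le> b" "b \<le> m"
  then have "a < b" "a \<in> {1..m}" "b \<in> {1..m}" using False by auto
  then have "\<sigma> a < \<sigma> b" using H(1) by blast
  then show ?thesis by simp
qed simp

lemma core1:
  fixes \<sigma> :: "nat \<Rightarrow> real"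
  assumes qpos: "\<forall>i\<in>{1..m}. 0 < q i"
    and smono: "\<forall>a\<in>{1..m}. \<forall>b\<in>{1..m}. a < b \<longrightarrow> \<sigma> a < \<sigma> b"
    and v0: "vc m q i0 s0" and v1: "vc m q i1 s1" and v2: "vc m q i2 s2"
    and o1: "i0 < i1" and o2: "i0 < i2"
    and iii: "i1 = i0 + 1 \<longrightarrow> s0 = 0 \<longrightarrow> s1 = 0"
    and P1: "0 < (\<Sum>l\<in>{0..m+1}. mu m q i1 s1 l - mu m q i0 s0 l)"
    and P12: "(\<Sum>l\<in>{0..m+1}. mu m q i1 s1 l - mu m q i0 s0 l) < (\<Sum>l\<in>{0..m+1}. mu m q i2 s2 l - mu m q i0 s0 l)"
  shows "(\<Sum>l\<in>{0..m+1}. (mu m q i1 s1 l - mu m q i0 s0 l) * \<sigma> l) / (\<Sum>l\<in>{0..m+1}. mu m q i1 s1 l - mu m q i0 s0 l)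
    < (\<Sum>l\<in>{0..m+1}. (mu m q i2 s2 l - mu m q i0 s0 l) * \<sigma> l) / (\<Sum>l\<in>{0..m+1}. mu m q i2 s2 l - mu m q i0 s0 l)"
proof -
  define S where "S = {0..m+1}"
  define M0 where "M0 = mu m q i0 s0"
  define M1 where "M1 = mu m q i1 s1"
  define M2 where "M2 = mu m q i2 s2"
  have fS: "finite S" unfolding S_def by simp
  have b0: "\<And>l. 0 \<le> M0 l \<and> M0 l \<le> qx m q l" unfolding M0_def using mu_bounds[OF qpos v0] by blast
  have b1: "\<And>l. 0 \<le> M1 l \<and> M1 l \<le> qx m q l" unfolding M1_def using mu_bounds[OF qpos v1] by blast
  have b2: "\<And>l. 0 \<le> M2 l \<and> M2 l \<le> qx m q l" unfolding M2_def using mu_bounds[OF qpos v2] by blast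
  have le01: "\<And>l. M0 l \<le> M1 l" unfolding M0_def M1_def using mu_mono[OF qpos v0 v1] o1 by blast
  have le12: "\<And>l. M1 l \<le> M2 l"
  proof (cases "i1 < i2 \<or> (i1 = i2 \<and> s2 \<le> s1)")
    case True then show "\<And>l. M1 l \<le> M2 l" unfolding M1_def M2_def using mu_mono[OF qpos v1 v2] by blast
  next
    case False
    then have "i2 < i1 \<or> (i2 = i1 \<and> s1 \<le> s2)" by auto
    then have "\<And>l. M2 l \<le> M1 l" unfolding M1_def M2_def using mu_mono[OF qpos v2 v1] by blast
    then have "(\<Sum>l\<in>S. M2 l - M0 l) \<le> (\<Sum>l\<in>S. M1 l - M0 l)" by (intro sum_mono) auto
    then show "\<And>l. M1 l \<le> M2 l" using P12 unfolding S_def M0_def M1_def M2_def by linarith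
  qed
  define w where "w l = M1 l - M0 l" for l
  define d where "d l = M2 l - M1 l" for l
  have sw: "(\<Sum>l\<in>S. M1 l - M0 l) = sum w S" unfolding w_def by simp
  have sd: "(\<Sum>l\<in>S. M2 l - M0 l) = sum w S + sum d S"
    unfolding w_def d_def by (simp add: sum.distrib[symmetric])
  have swe: "(\<Sum>l\<in>S. (M1 l - M0 l) * \<sigma> l) = (\<Sum>l\<in>S. w l * \<sigma> l)" unfolding w_def by simp
  have sde: "(\<Sum>l\<in>S. (M2 l - M0 l) * \<sigma> l) = (\<Sum>l\<in>S. w l * \<sigma> l) + (\<Sum>l\<in>S. d l * \<sigma> l)"
    unfolding w_def d_def by (simp add: sum.distrib[symmetric] algebra_simps)
  have Pw: "0 < sum w S" using P1 sw unfolding S_def M0_def M1_def by simp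
  have Pd: "0 < sum d S" using P12 sw sd unfolding S_def M0_def M1_def M2_def by simp
  have F1: "\<And>l. 0 < w l \<Longrightarrow> 1 \<le> l \<and> l \<le> m \<and> l \<le> i1"
  proof -
    fix l assume "0 < w l"
    then have "0 < M1 l" unfolding w_def using b0[of l] by simp
    then show "1 \<le> l \<and> l \<le> m \<and> l \<le> i1" using mu_pos[of m q i1 s1 l] qx_pos[of m q l] b1[of l]
      unfolding M1_def by auto
  qed
  have F2: "\<And>l. 0 < d l \<Longrightarrow> 1 \<le> l \<and> l \<le> m \<and> i1 \<le> l"
  proof -
    fix l assume "0 < d l"
    then have "M1 l < qx m q l" unfolding d_def using b2[of l] by simp
    then show "1 \<le> l \<and> l \<le> m \<and> i1 \<le> l" using mu_lt[OF v1, of l] qx_pos[of m q l] b1[of l]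
      unfolding M1_def by auto
  qed
  obtain lw where lw: "lw \<in> S" "0 < w lw" using sum_pos_ex[OF fS Pw] by blast
  obtain ld where ld: "ld \<in> S" "0 < d ld" using sum_pos_ex[OF fS Pd] by blast
  have i1r: "1 \<le> i1" "i1 \<le> m" using F1[OF lw(2)] F2[OF ld(2)] by auto
  have strict: "(\<exists>l\<in>S. 0 < w l \<and> \<sigma> l < \<sigma> i1) \<or> (\<exists>l\<in>S. 0 < d l \<and> \<sigma> i1 < \<sigma> l)"
  proof (rule ccontr)
    assume H: "\<not> ?thesis"
    have Hw: "\<And>l. l \<in> S \<Longrightarrow> 0 < w l \<Longrightarrow> l = i1"
    proof (rule ccontr)
      fix l assume "l \<in> S" "0 < w l" "l \<noteq> i1"
      then have "l < i1" "1 \<le> l" using F1 by force+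
      then have "\<sigma> l < \<sigma> i1" using smono i1r by auto
      then show False using H \<open>l \<in> S\<close> \<open>0 < w l\<close> by blast
    qed
    have Hd: "\<And>l. l \<in> S \<Longrightarrow> 0 < d l \<Longrightarrow> l = i1"
    proof (rule ccontr)
      fix l assume "l \<in> S" "0 < d l" "l \<noteq> i1"
      then have "i1 < l" "l \<le> m" using F2 by force+
      then have "\<sigma> i1 < \<sigma> l" using smono i1r by auto
      then show False using H \<open>l \<in> S\<close> \<open>0 < d l\<close> by blast
    qed
    have "ld = i1" using Hd ld by blast
    then have "M1 i1 < qx m q i1" using ld(2) b2[of i1] unfolding d_def by simp
    then have "0 < s1" unfolding M1_def mu_def by simp
    then have nn: "i1 \<noteq> i0 + 1 \<or> s0 \<noteq> 0" using iii by auto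
    show False
    proof (cases "i1 = i0 + 1")
      case False
      define l where "l = i0 + 1"
      have "l < i1" "1 \<le> l" "l \<le> m" using False o1 v1 unfolding l_def vc_def by auto
      then have "0 < qx m q l" using qx_pos2[OF qpos] by blast
      moreover have "w l = qx m q l" unfolding w_def M1_def M0_def mu_def l_def using \<open>l < i1\<close> l_def by simp
      moreover have "l \<in> S" unfolding S_def using \<open>l \<le> m\<close> by simp
      ultimately show False using Hw \<open>l < i1\<close> by fastforce
    next
      case True
      then have "s0 \<noteq> 0" using nn by simp
      then have "0 < s0" using v0 unfolding vc_def by simp
      moreover have "w i0 = s0" unfolding w_def M1_def M0_def mu_def using o1 by simp
      moreover have "i0 \<in> S" unfolding S_def using o1 v1 unfolding vc_def by simp
      ultimately show False using Hw o1 by fastforce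
    qed
  qed
  have key: "(\<Sum>l\<in>S. w l * \<sigma> l) * sum d S < (\<Sum>l\<in>S. d l * \<sigma> l) * sum w S"
  proof (rule avg[OF fS _ _ Pw Pd _ _ strict])
    show "\<forall>l\<in>S. 0 \<le> w l" unfolding w_def using le01 by simp
    show "\<forall>l\<in>S. 0 \<le> d l" unfolding d_def using le12 by simp
    show "\<forall>l\<in>S. 0 < w l \<longrightarrow> \<sigma> l \<le> \<sigma> i1" using F1 smono_le[OF smono] i1r by blast
    show "\<forall>l\<in>S. 0 < d l \<longrightarrow> \<sigma> i1 \<le> \<sigma> l" using F2 smono_le[OF smono] i1r by blast
  qed
  have "(\<Sum>l\<in>S. w l * \<sigma> l) / sum w S < ((\<Sum>l\<in>S. w l * \<sigma> l) + (\<Sum>l\<in>S. d l * \<sigma> l)) / (sum w S + sum d S)"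
    using key Pw Pd by (simp add: field_simps)
  then show ?thesis using sw sd swe sde unfolding S_def M0_def M1_def M2_def by simp
qed

lemma core2:
  fixes \<sigma> :: "nat \<Rightarrow> real"
  assumes qpos: "\<forall>i\<in>{1..m}. 0 < q i"
    and smono: "\<forall>a\<in>{1..m}. \<forall>b\<in>{1..m}. a < b \<longrightarrow> \<sigma> a < \<sigma> b"
    and va': "vc m q a' sa'" and va: "vc m q a sa" and vt: "vc m q t st"
    and o1: "a < t" and o2: "a' < t"
    and iii: "t = a + 1 \<longrightarrow> st = qx m q t \<longrightarrow> sa = qx m q a"
    and P1: "0 < (\<Sum>l\<in>{0..m+1}. mu m q t st l - mu m q a sa l)"
    and P12: "(\<Sum>l\<in>{0..m+1}. mu m q t st l - mu m q a sa l) < (\<Sum>l\<in>{0..m+1}. mu m q t st l - mu m q a' sa' l)"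
  shows "(\<Sum>l\<in>{0..m+1}. (mu m q t st l - mu m q a' sa' l) * \<sigma> l) / (\<Sum>l\<in>{0..m+1}. mu m q t st l - mu m q a' sa' l)
    < (\<Sum>l\<in>{0..m+1}. (mu m q t st l - mu m q a sa l) * \<sigma> l) / (\<Sum>l\<in>{0..m+1}. mu m q t st l - mu m q a sa l)"
proof -
  define S where "S = {0..m+1}"
  define M' where "M' = mu m q a' sa'"
  define MA where "MA = mu m q a sa"
  define MT where "MT = mu m q t st"
  have fS: "finite S" unfolding S_def by simp
  have b': "\<And>l. 0 \<le> M' l \<and> M' l \<le> qx m q l" unfolding M'_def using mu_bounds[OF qpos va'] by blast
  have bA: "\<And>l. 0 \<le> MA l \<and> MA l \<le> qx m q l" unfolding MA_def using mu_bounds[OF qpos va] by blast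
  have bT: "\<And>l. 0 \<le> MT l \<and> MT l \<le> qx m q l" unfolding MT_def using mu_bounds[OF qpos vt] by blast
  have leAT: "\<And>l. MA l \<le> MT l" unfolding MA_def MT_def using mu_mono[OF qpos va vt] o1 by blast
  have le'A: "\<And>l. M' l \<le> MA l"
  proof (cases "a' < a \<or> (a' = a \<and> sa \<le> sa')")
    case True then show "\<And>l. M' l \<le> MA l" unfolding M'_def MA_def using mu_mono[OF qpos va' va] by blast
  next
    case False
    then have "a < a' \<or> (a = a' \<and> sa' \<le> sa)" by auto
    then have "\<And>l. MA l \<le> M' l" unfolding M'_def MA_def using mu_mono[OF qpos va va'] by blast
    then have "(\<Sum>l\<in>S. MT l - M' l) \<le> (\<Sum>l\<in>S. MT l - MA l)" by (intro sum_mono) auto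
    then show "\<And>l. M' l \<le> MA l" using P12 unfolding S_def M'_def MA_def MT_def by linarith
  qed
  define w where "w l = MT l - MA l" for l
  define d where "d l = MA l - M' l" for l
  have sw: "(\<Sum>l\<in>S. MT l - MA l) = sum w S" unfolding w_def by simp
  have sd: "(\<Sum>l\<in>S. MT l - M' l) = sum w S + sum d S"
    unfolding w_def d_def by (simp add: sum.distrib[symmetric])
  have swe: "(\<Sum>l\<in>S. (MT l - MA l) * \<sigma> l) = (\<Sum>l\<in>S. w l * \<sigma> l)" unfolding w_def by simp
  have sde: "(\<Sum>l\<in>S. (MT l - M' l) * \<sigma> l) = (\<Sum>l\<in>S. w l * \<sigma> l) + (\<Sum>l\<in>S. d l * \<sigma> l)"
    unfolding w_def d_def by (simp add: sum.distrib[symmetric] algebra_simps)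
  have Pw: "0 < sum w S" using P1 sw unfolding S_def MA_def MT_def by simp
  have Pd: "0 < sum d S" using P12 sw sd unfolding S_def M'_def MA_def MT_def by simp
  have F1: "\<And>l. 0 < d l \<Longrightarrow> 1 \<le> l \<and> l \<le> m \<and> l \<le> a"
  proof -
    fix l assume "0 < d l"
    then have "0 < MA l" unfolding d_def using b'[of l] by simp
    then show "1 \<le> l \<and> l \<le> m \<and> l \<le> a" using mu_pos[of m q a sa l] qx_pos[of m q l] bA[of l]
      unfolding MA_def by auto
  qed
  have F2: "\<And>l. 0 < w l \<Longrightarrow> 1 \<le> l \<and> l \<le> m \<and> a \<le> l"
  proof -
    fix l assume "0 < w l"
    then have "MA l < qx m q l" unfolding w_def using bT[of l] by simp
    then show "1 \<le> l \<and> l \<le> m \<and> a \<le> l" using mu_lt[OF va, of l] qx_pos[of m q l] bA[of l]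
      unfolding MA_def by auto
  qed
  obtain lw where lw: "lw \<in> S" "0 < w lw" using sum_pos_ex[OF fS Pw] by blast
  obtain ld where ld: "ld \<in> S" "0 < d ld" using sum_pos_ex[OF fS Pd] by blast
  have ar: "1 \<le> a" "a \<le> m" using F2[OF lw(2)] F1[OF ld(2)] by auto
  have strict: "(\<exists>l\<in>S. 0 < d l \<and> \<sigma> l < \<sigma> a) \<or> (\<exists>l\<in>S. 0 < w l \<and> \<sigma> a < \<sigma> l)"
  proof (rule ccontr)
    assume H: "\<not> ?thesis"
    have Hd: "\<And>l. l \<in> S \<Longrightarrow> 0 < d l \<Longrightarrow> l = a"
    proof (rule ccontr)
      fix l assume "l \<in> S" "0 < d l" "l \<noteq> a"
      then have "l < a" "1 \<le> l" using F1 by force+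
      then have "\<sigma> l < \<sigma> a" using smono ar by auto
      then show False using H \<open>l \<in> S\<close> \<open>0 < d l\<close> by blast
    qed
    have Hw: "\<And>l. l \<in> S \<Longrightarrow> 0 < w l \<Longrightarrow> l = a"
    proof (rule ccontr)
      fix l assume "l \<in> S" "0 < w l" "l \<noteq> a"
      then have "a < l" "l \<le> m" using F2 by force+
      then have "\<sigma> a < \<sigma> l" using smono ar by auto
      then show False using H \<open>l \<in> S\<close> \<open>0 < w l\<close> by blast
    qed
    have "ld = a" using Hd ld by blast
    then have "0 < MA a" using ld(2) b'[of a] unfolding d_def by simp
    then have "sa \<noteq> qx m q a" unfolding MA_def mu_def by simp
    then have nn: "t \<noteq> a + 1 \<or> st \<noteq> qx m q t" using iii by auto
    show False
    proof (cases "t = a + 1")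
      case False
      define l where "l = a + 1"
      have "l < t" "1 \<le> l" "l \<le> m" using False o1 vt unfolding l_def vc_def by auto
      then have "0 < qx m q l" using qx_pos2[OF qpos] by blast
      moreover have "w l = qx m q l" unfolding w_def MT_def MA_def mu_def l_def using \<open>l < t\<close> l_def by simp
      moreover have "l \<in> S" unfolding S_def using \<open>l \<le> m\<close> by simp
      moreover have "l \<noteq> a" unfolding l_def by simp
      ultimately show False using Hw[of l] by simp
    next
      case True
      then have "st \<noteq> qx m q t" using nn by simp
      then have "0 < qx m q t - st" using vt unfolding vc_def by simp
      moreover have "w t = qx m q t - st" unfolding w_def MT_def MA_def mu_def using o1 by simp
      moreover have "t \<in> S" unfolding S_def using vt unfolding vc_def by simp
      ultimately show False using Hw[of t] o1 by simp
    qed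
  qed
  have key: "(\<Sum>l\<in>S. d l * \<sigma> l) * sum w S < (\<Sum>l\<in>S. w l * \<sigma> l) * sum d S"
  proof (rule avg[OF fS _ _ Pd Pw _ _ strict])
    show "\<forall>l\<in>S. 0 \<le> w l" unfolding w_def using leAT by simp
    show "\<forall>l\<in>S. 0 \<le> d l" unfolding d_def using le'A by simp
    show "\<forall>l\<in>S. 0 < d l \<longrightarrow> \<sigma> l \<le> \<sigma> a" using F1 smono_le[OF smono] ar by blast
    show "\<forall>l\<in>S. 0 < w l \<longrightarrow> \<sigma> a \<le> \<sigma> l" using F2 smono_le[OF smono] ar by blast
  qed
  have "((\<Sum>l\<in>S. w l * \<sigma> l) + (\<Sum>l\<in>S. d l * \<sigma> l)) / (sum w S + sum d S) < (\<Sum>l\<in>S. w l * \<sigma> l) / sum w S"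
    using key Pw Pd by (simp add: field_simps)
  then show ?thesis using sw sd swe sde unfolding S_def M'_def MA_def MT_def by simp
qed

lemma cut_vc:
  assumes par: "dq_params m q n ii s" and n2: "2 \<le> n" and qpos: "\<forall>i\<in>{1..m}. 0 < q i"
    and jr: "j \<in> {1..n+1}"
  shows "vc m q (ix m n ii j) (sx n s j)"
proof -
  consider "j = 1" | "j = n + 1" | "j \<in> {2..n}" using jr by force
  then show ?thesis
  proof cases
    case 1 then show ?thesis by (simp add: vc_def ix_def sx_def qx_def)
  next
    case 2 then show ?thesis using n2 by (simp add: vc_def ix_def sx_def qx_def)
  next
    case 3
    then have "j \<noteq> 1" "j \<noteq> n + 1" by auto
    have "ii j \<le> m" "0 \<le> s j" "s j \<le> qx m q (ii j)" using par 3 unfolding dq_params_def by blast+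
    then show ?thesis using \<open>j \<noteq> 1\<close> \<open>j \<noteq> n + 1\<close> by (simp add: vc_def ix_def sx_def)
  qed
qed

lemma cut_lt:
  assumes par: "dq_params m q n ii s" and n2: "2 \<le> n" and jr: "j \<in> {1..n}"
  shows "ix m n ii j < ix m n ii (j + 1)"
proof -
  consider "j = 1" | "j = n" | "j \<in> {2..<n}" using jr by force
  then show ?thesis
  proof cases
    case 1
    have "2 \<in> {2..n}" using n2 by simp
    then have "1 \<le> ii 2" using par unfolding dq_params_def by blast
    then show ?thesis using 1 n2 by (simp add: ix_def numeral_2_eq_2)
  next
    case 2
    have "n \<in> {2..n}" using n2 by simp
    then have "ii n \<le> m" using par unfolding dq_params_def by blast
    then show ?thesis using 2 n2 by (simp add: ix_def)
  next
    case 3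
    then have "j \<in> {2..n}" "j + 1 \<in> {2..n}" "j < j + 1" by auto
    then have "ii j < ii (j + 1)" using par unfolding dq_params_def by blast
    then show ?thesis using 3 n2 by (simp add: ix_def)
  qed
qed

lemma p_eq:
  assumes par: "dq_params m q n ii s" and n2: "2 \<le> n" and qpos: "\<forall>i\<in>{1..m}. 0 < q i"
    and jr: "j \<in> {1..n}"
  shows "dq_p m q n ii s j = (\<Sum>l\<in>{0..m+1}. mu m q (ix m n ii (j+1)) (sx n s (j+1)) l - mu m q (ix m n ii j) (sx n s j) l)"
    and "dq_pe m q \<sigma> n ii s j = (\<Sum>l\<in>{0..m+1}. (mu m q (ix m n ii (j+1)) (sx n s (j+1)) l - mu m q (ix m n ii j) (sx n s j) l) * \<sigma> l)"
proof -
  have lt: "ix m n ii j < ix m n ii (j + 1)" using cut_lt[OF par n2 jr] .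
  have v: "vc m q (ix m n ii (j+1)) (sx n s (j+1))" using cut_vc[OF par n2 qpos, of "j+1"] jr by simp
  then have le: "ix m n ii (j+1) \<le> m + 1" unfolding vc_def by simp
  show "dq_p m q n ii s j = (\<Sum>l\<in>{0..m+1}. mu m q (ix m n ii (j+1)) (sx n s (j+1)) l - mu m q (ix m n ii j) (sx n s j) l)"
    using sum_mu_diff[OF lt le, of q "sx n s (j+1)" "sx n s j" "\<lambda>_. 1"] by (simp add: dq_p_def)
  show "dq_pe m q \<sigma> n ii s j = (\<Sum>l\<in>{0..m+1}. (mu m q (ix m n ii (j+1)) (sx n s (j+1)) l - mu m q (ix m n ii j) (sx n s j) l) * \<sigma> l)"
    using sum_mu_diff[OF lt le, of q "sx n s (j+1)" "sx n s j" \<sigma>] by (simp add: dq_pe_def)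
qed

theorem lemma9:
  fixes m n k j :: nat
    and q \<sigma> :: "nat \<Rightarrow> real"
    and ii ii' :: "nat \<Rightarrow> nat"
    and s s' :: "nat \<Rightarrow> real"
  assumes "2 \<le> n" and "n < m"
    and "\<forall>i\<in>{1..m}. 0 < q i"
    and "(\<Sum>i=1..m. q i) = 1"
    and "0 \<le> \<sigma> 1" and "\<sigma> m \<le> 1/2"
    and "\<forall>a\<in>{1..m}. \<forall>b\<in>{1..m}. a < b \<longrightarrow> \<sigma> a < \<sigma> b"
    and "in_B_star m (bsc_mix m q \<sigma>)"
    and "is_Pstar_degradation m q \<sigma> n ii s"
    and "is_Pstar_degradation m q \<sigma> n ii' s'"
    and "k \<in> {2..n}" and "j \<in> {2..n}"
    and "ii k = ii' j" and "s k = s' j"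
  shows "(dq_eps m q \<sigma> n ii s k \<ge> dq_eps m q \<sigma> n ii' s' j
            \<longrightarrow> dq_p m q n ii s k \<ge> dq_p m q n ii' s' j) \<and>
         (dq_eps m q \<sigma> n ii s (k - 1) \<le> dq_eps m q \<sigma> n ii' s' (j - 1)
            \<longrightarrow> dq_p m q n ii s (k - 1) \<ge> dq_p m q n ii' s' (j - 1))"
proof -
  note n2 = assms(1) and qpos = assms(3) and smono = assms(7)
  have par: "dq_params m q n ii s" and pos: "\<forall>j\<in>{1..n}. dq_p m q n ii s j > 0"
    and iii: "\<forall>j\<in>{1..n}. ix m n ii (j + 1) = ix m n ii j + 1 \<longrightarrow>
        (sx n s j = 0 \<longrightarrow> sx n s (j + 1) = 0) \<and>
        (sx n s (j + 1) = qx m q (ix m n ii (j + 1)) \<longrightarrow> sx n s j = qx m q (ix m n ii j))"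
    using assms(9) unfolding is_Pstar_degradation_def by blast+
  have par': "dq_params m q n ii' s'" and pos': "\<forall>j\<in>{1..n}. dq_p m q n ii' s' j > 0"
    using assms(10) unfolding is_Pstar_degradation_def by blast+
  have kr: "k \<in> {1..n}" "k - 1 \<in> {1..n}" "k \<in> {1..n+1}" "k+1 \<in> {1..n+1}" "k - 1 \<in> {1..n+1}" "k - 1 + 1 = k"
    using assms(11) by auto
  have jr: "j \<in> {1..n}" "j - 1 \<in> {1..n}" "j \<in> {1..n+1}" "j+1 \<in> {1..n+1}" "j - 1 \<in> {1..n+1}" "j - 1 + 1 = j"
    using assms(12) by auto
  have eqI: "ix m n ii' j = ix m n ii k" using assms(11,12,13) by (auto simp: ix_def)
  have eqX: "sx n s' j = sx n s k" using assms(11,12,14) by (auto simp: sx_def)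
  have C1: "dq_p m q n ii' s' j \<le> dq_p m q n ii s k"
    if ge: "dq_eps m q \<sigma> n ii' s' j \<le> dq_eps m q \<sigma> n ii s k"
  proof (rule ccontr)
    assume "\<not> ?thesis"
    then have lt: "dq_p m q n ii s k < dq_p m q n ii' s' j" by simp
    have "dq_eps m q \<sigma> n ii s k < dq_eps m q \<sigma> n ii' s' j"
      unfolding dq_eps_def p_eq[OF par n2 qpos kr(1)] p_eq[OF par' n2 qpos jr(1)] eqI eqX
    proof (rule core1[OF qpos smono])
      show "vc m q (ix m n ii k) (sx n s k)" using cut_vc[OF par n2 qpos kr(3)] .
      show "vc m q (ix m n ii (k+1)) (sx n s (k+1))" using cut_vc[OF par n2 qpos kr(4)] .
      show "vc m q (ix m n ii' (j+1)) (sx n s' (j+1))" using cut_vc[OF par' n2 qpos jr(4)] .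
      show "ix m n ii k < ix m n ii (k+1)" using cut_lt[OF par n2 kr(1)] .
      show "ix m n ii k < ix m n ii' (j+1)" using cut_lt[OF par' n2 jr(1)] eqI by simp
      show "ix m n ii (k + 1) = ix m n ii k + 1 \<longrightarrow> sx n s k = 0 \<longrightarrow> sx n s (k + 1) = 0"
        using iii kr(1) by blast
      show "0 < (\<Sum>l\<in>{0..m+1}. mu m q (ix m n ii (k + 1)) (sx n s (k + 1)) l - mu m q (ix m n ii k) (sx n s k) l)"
      proof -
        have "0 < dq_p m q n ii s k" using pos kr(1) by blast
        then show ?thesis by (simp only: p_eq(1)[OF par n2 qpos kr(1)])
      qed
      show "(\<Sum>l\<in>{0..m+1}. mu m q (ix m n ii (k + 1)) (sx n s (k + 1)) l - mu m q (ix m n ii k) (sx n s k) l)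
          < (\<Sum>l\<in>{0..m+1}. mu m q (ix m n ii' (j + 1)) (sx n s' (j + 1)) l - mu m q (ix m n ii k) (sx n s k) l)"
        using lt unfolding p_eq(1)[OF par n2 qpos kr(1)] p_eq(1)[OF par' n2 qpos jr(1)] eqI eqX .
    qed
    then show False using ge by simp
  qed
  have C2: "dq_p m q n ii' s' (j - 1) \<le> dq_p m q n ii s (k - 1)"
    if le: "dq_eps m q \<sigma> n ii s (k - 1) \<le> dq_eps m q \<sigma> n ii' s' (j - 1)"
  proof (rule ccontr)
    assume "\<not> ?thesis"
    then have lt: "dq_p m q n ii s (k - 1) < dq_p m q n ii' s' (j - 1)" by simp
    have "dq_eps m q \<sigma> n ii' s' (j - 1) < dq_eps m q \<sigma> n ii s (k - 1)"
      unfolding dq_eps_def p_eq[OF par n2 qpos kr(2)] p_eq[OF par' n2 qpos jr(2)] kr(6) jr(6) eqI eqX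
    proof (rule core2[OF qpos smono])
      show "vc m q (ix m n ii (k - 1)) (sx n s (k - 1))" using cut_vc[OF par n2 qpos kr(5)] .
      show "vc m q (ix m n ii' (j - 1)) (sx n s' (j - 1))" using cut_vc[OF par' n2 qpos jr(5)] .
      show "vc m q (ix m n ii k) (sx n s k)" using cut_vc[OF par n2 qpos kr(3)] .
      show "ix m n ii (k - 1) < ix m n ii k" using cut_lt[OF par n2 kr(2)] kr(6) by simp
      show "ix m n ii' (j - 1) < ix m n ii k" using cut_lt[OF par' n2 jr(2)] jr(6) eqI by simp
      show "ix m n ii k = ix m n ii (k - 1) + 1 \<longrightarrow> sx n s k = qx m q (ix m n ii k) \<longrightarrow> sx n s (k - 1) = qx m q (ix m n ii (k - 1))"
        using iii kr(2) kr(6) by metis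
      show "0 < (\<Sum>l\<in>{0..m+1}. mu m q (ix m n ii k) (sx n s k) l - mu m q (ix m n ii (k - 1)) (sx n s (k - 1)) l)"
      proof -
        have "0 < dq_p m q n ii s (k - 1)" using pos kr(2) by blast
        then show ?thesis by (simp only: p_eq(1)[OF par n2 qpos kr(2)] kr(6))
      qed
      show "(\<Sum>l\<in>{0..m+1}. mu m q (ix m n ii k) (sx n s k) l - mu m q (ix m n ii (k - 1)) (sx n s (k - 1)) l)
          < (\<Sum>l\<in>{0..m+1}. mu m q (ix m n ii k) (sx n s k) l - mu m q (ix m n ii' (j - 1)) (sx n s' (j - 1)) l)"
        using lt unfolding p_eq(1)[OF par n2 qpos kr(2)] p_eq(1)[OF par' n2 qpos jr(2)] kr(6) jr(6) eqI eqX .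
    qed
    then show False using le by simp
  qed
  show ?thesis using C1 C2 by blast
qed

end
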